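(* Let $(u_1,v_1),(u_2,v_2)\in\mathbb{R}^2$ and let $d>\sqrt{(u_1-u_2)^2+(v_1-v_2)^2}$. Define the $2\times2$ symmetric matrix $$M(x,y)=\bigl(d^2+(u_1-u_2)(2x-u_1-u_2)+(v_1-v_2)(2y-v_1-v_2)\bigr)I_2+2d\begin{bmatrix}x-u_2 & y-v_2\\ y-v_2 & -x+u_2\end{bmatrix}.$$ Then $\det M(x,y)=\prod_{\epsilon_1,\epsilon_2\in\{\pm1\}}\bigl(d+\epsilon_1 r_1+\epsilon_2 r_2\bigr)$ where $r_i=\sqrt{(x-u_i)^2+(y-v_i)^2}$, and $$\{(x,y)\in\mathbb{R}^2: M(x,y)\succeq0\}=\{(x,y)\in\mathbb{R}^2: r_1+r_2\le d\}.$$ *)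

theory Defs
  imports "HOL-Analysis.Analysis"
begin

definition psd :: "real^'n^'n \<Rightarrow> bool" where
  "psd A \<longleftrightarrow> transpose A = A \<and> (\<forall>v. v \<bullet> (A *v v) \<ge> 0)"

definition Mmat :: "real \<Rightarrow> real \<Rightarrow> real \<Rightarrow> real \<Rightarrow> real \<Rightarrow> real \<Rightarrow> real \<Rightarrow> real^2^2" where
  "Mmat d u1 v1 u2 v2 x y =
     (d\<^sup>2 + (u1 - u2) * (2*x - u1 - u2) + (v1 - v2) * (2*y - v1 - v2)) *\<^sub>R mat 1
     + (2 * d) *\<^sub>R (vector [vector [x - u2, y - v2], vector [y - v2, - x + u2]])"

end

theory Submission
  imports Defs
begin

lemma M_ent:
  fixes d u1 v1 u2 v2 x y :: real
  defines "c \<equiv> d\<^sup>2 + (u1 - u2) * (2*x - u1 - u2) + (v1 - v2) * (2*y - v1 - v2)"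
  shows "Mmat d u1 v1 u2 v2 x y $1$1 = c + 2*d*(x-u2)"
    "Mmat d u1 v1 u2 v2 x y $1$2 = 2*d*(y-v2)"
    "Mmat d u1 v1 u2 v2 x y $2$1 = 2*d*(y-v2)"
    "Mmat d u1 v1 u2 v2 x y $2$2 = c - 2*d*(x-u2)"
  by (simp_all add: Mmat_def mat_def c_def algebra_simps)

lemma qf2:
  fixes A :: "real^2^2" and w :: "real^2"
  shows "w \<bullet> (A *v w) = w$1 * (A$1$1 * w$1 + A$1$2 * w$2) + w$2 * (A$2$1 * w$1 + A$2$2 * w$2)"
  by (simp add: inner_vec_def matrix_vector_mult_def sum_2)

lemma tri:
  fixes x y u1 v1 u2 v2 :: real
  shows "sqrt ((x - u2)\<^sup>2 + (y - v2)\<^sup>2) \<le> sqrt ((x - u1)\<^sup>2 + (y - v1)\<^sup>2) + sqrt ((u1 - u2)\<^sup>2 + (v1 - v2)\<^sup>2)"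
proof -
  have "dist (Complex x y) (Complex u2 v2) \<le> dist (Complex x y) (Complex u1 v1) + dist (Complex u1 v1) (Complex u2 v2)"
    by (rule dist_triangle)
  then show ?thesis by (simp add: dist_norm cmod_def)
qed

theorem mainTheorem5:
  fixes u1 v1 u2 v2 d :: real
  assumes "d > sqrt ((u1 - u2)\<^sup>2 + (v1 - v2)\<^sup>2)"
  shows "(\<forall>x y. det (Mmat d u1 v1 u2 v2 x y) =
            (\<Prod>e1\<in>{-1, 1::real}. \<Prod>e2\<in>{-1, 1::real}.
               d + e1 * sqrt ((x - u1)\<^sup>2 + (y - v1)\<^sup>2) + e2 * sqrt ((x - u2)\<^sup>2 + (y - v2)\<^sup>2)))
    \<and> ({(x, y). psd (Mmat d u1 v1 u2 v2 x y)} =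
         {(x, y). sqrt ((x - u1)\<^sup>2 + (y - v1)\<^sup>2) + sqrt ((x - u2)\<^sup>2 + (y - v2)\<^sup>2) \<le> d})"
proof -
  have "0 \<le> sqrt ((u1 - u2)\<^sup>2 + (v1 - v2)\<^sup>2)" by simp
  hence d0: "d > 0" using assms by linarith
  {
    fix x y :: real
    define c where "c = d\<^sup>2 + (u1 - u2) * (2*x - u1 - u2) + (v1 - v2) * (2*y - v1 - v2)"
    define a where "a = x - u2"
    define b where "b = y - v2"
    define r1 where "r1 = sqrt ((x - u1)\<^sup>2 + (y - v1)\<^sup>2)"
    define r2 where "r2 = sqrt ((x - u2)\<^sup>2 + (y - v2)\<^sup>2)"
    let ?M = "Mmat d u1 v1 u2 v2 x y"
    have r1s: "r1^2 = (x - u1)\<^sup>2 + (y - v1)\<^sup>2" unfolding r1_def by simp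
    have r2s: "r2^2 = a^2 + b^2" unfolding r2_def a_def b_def by simp
    have r10: "r1 \<ge> 0" "r2 \<ge> 0" unfolding r1_def r2_def by simp_all
    have cc: "c = d^2 + r2^2 - r1^2" unfolding c_def r2s r1s a_def b_def by (simp add: algebra_simps power2_eq_square)
    have M: "?M$1$1 = c + 2*d*a" "?M$1$2 = 2*d*b" "?M$2$1 = 2*d*b" "?M$2$2 = c - 2*d*a"
      using M_ent[of d u1 v1 u2 v2 x y] unfolding c_def a_def b_def by simp_all
    have det: "det ?M = c^2 - 4*d^2*r2^2"
      unfolding det_2 M using r2s by algebra
    have "det ?M = (\<Prod>e1\<in>{-1, 1::real}. \<Prod>e2\<in>{-1, 1::real}. d + e1 * r1 + e2 * r2)"
      unfolding det cc by simp algebra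
    hence D: "det ?M = (\<Prod>e1\<in>{-1, 1::real}. \<Prod>e2\<in>{-1, 1::real}.
               d + e1 * sqrt ((x - u1)\<^sup>2 + (y - v1)\<^sup>2) + e2 * sqrt ((x - u2)\<^sup>2 + (y - v2)\<^sup>2))"
      unfolding r1_def r2_def .
    have sym: "transpose ?M = ?M"
      by (simp add: vec_eq_iff forall_2 transpose_def M)
    have qf: "w \<bullet> (?M *v w) = c * ((w$1)^2 + (w$2)^2) + 2*d*(a*((w$1)^2 - (w$2)^2) + 2*b*w$1*w$2)" for w
      unfolding qf2 M by algebra
    have cs: "\<bar>a*(p^2 - q^2) + 2*b*p*q\<bar> \<le> r2 * (p^2 + q^2)" for p q :: real
    proof -
      have e: "(a*(p^2 - q^2) + 2*b*p*q)^2 + (b*(p^2-q^2) - 2*a*p*q)^2 = (a^2+b^2)*(p^2+q^2)^2"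
        by algebra
      have "(a*(p^2 - q^2) + 2*b*p*q)^2 \<le> (r2 * (p^2 + q^2))^2"
        unfolding power_mult_distrib r2s using e zero_le_power2[of "b*(p^2-q^2) - 2*a*p*q"] by linarith
      hence "\<bar>a*(p^2 - q^2) + 2*b*p*q\<bar> \<le> \<bar>r2 * (p^2 + q^2)\<bar>" by (simp only: abs_le_square_iff)
      thus ?thesis using r10 by simp
    qed
    have tr: "r2 < d + r1" using tri[of x u2 y v2 u1 v1] assms unfolding r1_def r2_def by simp
    have "psd ?M \<longleftrightarrow> r1 + r2 \<le> d"
    proof
      assume "psd ?M"
      hence P: "\<And>w. w \<bullet> (?M *v w) \<ge> 0" unfolding psd_def by blast
      have "c - 2*d*r2 \<ge> 0"
      proof (cases "b = 0 \<and> a = - r2")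
        case False
        define w :: "real^2" where "w = vector [b, -a - r2]"
        have w0: "(w$1)^2 + (w$2)^2 > 0" using False by (auto simp add: w_def sum_power2_gt_zero_iff)
        have "w \<bullet> (?M *v w) = (c - 2*d*r2) * ((w$1)^2 + (w$2)^2)"
          using r2s by (simp add: qf w_def) algebra
        then show ?thesis using P[of w] w0 by (simp add: zero_le_mult_iff)
      next
        case True
        show ?thesis
        proof (cases "r2 = 0")
          case True
          have "(vector [1, 0] :: real^2) \<bullet> (?M *v vector [1,0]) = c" unfolding qf using True \<open>b = 0 \<and> a = - r2\<close> by simp
          then show ?thesis using P[of "vector [1,0]"] True by simp
        next
          case False
          define w :: "real^2" where "w = vector [a - r2, b]"
          have w0: "(w$1)^2 + (w$2)^2 > 0" using False r10 \<open>b = 0 \<and> a = - r2\<close> by (auto simp add: w_def sum_power2_gt_zero_iff)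
          have "w \<bullet> (?M *v w) = (c - 2*d*r2) * ((w$1)^2 + (w$2)^2)"
            using r2s by (simp add: qf w_def) algebra
          then show ?thesis using P[of w] w0 by (simp add: zero_le_mult_iff)
        qed
      qed
      hence "(d - r2)^2 \<ge> r1^2" unfolding cc by (simp add: algebra_simps power2_eq_square)
      hence "\<bar>d - r2\<bar> \<ge> r1" using r10 abs_le_square_iff[of r1 "d-r2"] by simp
      thus "r1 + r2 \<le> d" using tr by linarith
    next
      assume h: "r1 + r2 \<le> d"
      have "r1^2 \<le> (d - r2)^2" using h r10 by (intro power_mono) auto
      hence c2: "c \<ge> 2*d*r2" unfolding cc by (simp add: algebra_simps power2_eq_square)
      have "w \<bullet> (?M *v w) \<ge> 0" for w
      proof -
        have "c * ((w$1)^2 + (w$2)^2) \<ge> 2*d*(r2*((w$1)^2 + (w$2)^2))"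
          using mult_right_mono[OF c2, of "(w$1)^2 + (w$2)^2"] by (simp add: mult.assoc)
        moreover have "2*d*(a*((w$1)^2 - (w$2)^2) + 2*b*w$1*w$2) \<ge> - (2*d*(r2*((w$1)^2 + (w$2)^2)))"
        proof -
          have "- (r2*((w$1)^2 + (w$2)^2)) \<le> a*((w$1)^2 - (w$2)^2) + 2*b*w$1*w$2"
            using cs[of "w$1" "w$2"] by (simp add: abs_le_iff)
          from mult_left_mono[OF this, of "2*d"] d0 show ?thesis by simp
        qed
        ultimately show ?thesis unfolding qf by linarith
      qed
      thus "psd ?M" unfolding psd_def using sym by blast
    qed
    note D this[unfolded r1_def r2_def]
  }
  then show ?thesis by auto
qed

end
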